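(* Let $r \geq 3$ and $k \geq \max\{r-1,4\}$ be integers. Define the binary word $x_{k,r} = ((01)^{k-1} 00)^{r-3} (01)^{k-1} 0$. Then $|x_{k,r}| = 2k(r-2)-1$, and $x_{k,r}$ contains no $k$-power as a factor and no $r$-antipower as a factor.
   Context: For a word $u$ and integer $k\ge 1$, $u^k$ denotes the concatenation of $k$ copies of $u$. A $k$-power is a word of the form $u^k$ with $u$ nonempty. An $r$-antipower is a word of the form $u_1 u_2 \cdots u_r$ with $|u_1| = \cdots = |u_r|$ and the words $u_1,\dots,u_r$ pairwise distinct. A factor of a word $w$ is a contiguous subword of $w$. $|w|$ denotes the length of $w$. *)

theory Defs
  imports Main
begin

definition word_pow :: "'a list \<Rightarrow> nat \<Rightarrow> 'a list" where
  "word_pow u k = concat (replicate k u)"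

definition is_factor :: "'a list \<Rightarrow> 'a list \<Rightarrow> bool" where
  "is_factor v w \<longleftrightarrow> (\<exists>p s. w = p @ v @ s)"

definition is_power :: "nat \<Rightarrow> 'a list \<Rightarrow> bool" where
  "is_power k v \<longleftrightarrow> (\<exists>u. u \<noteq> [] \<and> v = word_pow u k)"

definition is_antipower :: "nat \<Rightarrow> 'a list \<Rightarrow> bool" where
  "is_antipower r v \<longleftrightarrow> (\<exists>us :: 'a list list. length us = r \<and> v = concat us \<and>
      (\<forall>i<r. \<forall>j<r. length (us ! i) = length (us ! j)) \<and> distinct us)"

definition x_word :: "nat \<Rightarrow> nat \<Rightarrow> nat list" where
  "x_word k r = word_pow (word_pow [0,1] (k-1) @ [0,0]) (r-3) @ word_pow [0,1] (k-1) @ [0]"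

end

theory Submission
  imports Defs
begin


lemma wp_len: "length (word_pow u n) = n * length u"
  by (induction n) (auto simp: word_pow_def)

lemma wp_Suc: "word_pow u (Suc n) = u @ word_pow u n"
  by (simp add: word_pow_def)

lemma wp_nth: "i < n * length u \<Longrightarrow> word_pow u n ! i = u ! (i mod length u)"
proof (induction n arbitrary: i)
  case 0 then show ?case by simp
next
  case (Suc n)
  show ?case
  proof (cases "i < length u")
    case True then show ?thesis by (simp add: wp_Suc nth_append)
  next
    case False
    then have "i - length u < n * length u" using Suc.prems by simp
    then show ?thesis using False Suc.IH[of "i - length u"]
      by (simp add: wp_Suc nth_append wp_len le_mod_geq)
  qed
qed

lemma n01: "[0::nat,1] ! (m mod 2) = m mod 2"
  by (cases "m mod 2 = 0") (auto simp: mod2_eq_if)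

lemma n01': "m < 2*k - 2 \<Longrightarrow> (word_pow [0::nat,1] (k-1) @ xs) ! m = m mod 2"
proof -
  assume "m < 2*k-2"
  have L: "length [0::nat,1] = 2" by simp
  have "m < (k-1) * length [0::nat,1]" using \<open>m < 2*k-2\<close> by simp
  then have "word_pow [0::nat,1] (k-1) ! m = [0::nat,1] ! (m mod 2)"
    using wp_nth[of m "k-1" "[0::nat,1]"] by (simp only: L)
  moreover have "m < length (word_pow [0::nat,1] (k-1))" using \<open>m < 2*k-2\<close> by (simp add: wp_len)
  ultimately show ?thesis using n01[of m] by (simp add: nth_append)
qed

lemma n00: "j < 2 \<Longrightarrow> [0::nat,0] ! j = 0"
  by (cases j) auto

definition ff :: "nat \<Rightarrow> nat \<Rightarrow> nat" where
  "ff k i = (if 2*k - 2 \<le> i mod (2*k) then 0 else i mod 2)"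

lemma mod2k: "(i::nat) mod (2*k) mod 2 = i mod 2"
  by (simp add: mod_mod_cancel)

lemma x_len: "k \<ge> 1 \<Longrightarrow> r \<ge> 3 \<Longrightarrow> length (x_word k r) = 2*k*(r-2) - 1"
proof -
  assume a: "k \<ge> 1" "r \<ge> 3"
  have h1: "length (word_pow [0::nat,1] (k-1) @ [0,0]) = 2*k"
    and h2: "length (word_pow [0::nat,1] (k-1) @ [0]) = 2*k-1" using a by (simp_all add: wp_len)
  have "length (x_word k r) = (r-3) * (2*k) + (2*k - 1)"
  proof -
    have e: "(k-1)*length [0::nat,1] + length [0::nat,0] = 2*k" "(k-1)*length [0::nat,1] + length [0::nat] = 2*k-1" using a by auto
    show ?thesis unfolding x_word_def length_append wp_len by (simp only: e)
  qed
  also have "\<dots> = 2*k*(r-2) - 1"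
  proof -
    have "r - 2 = (r-3) + 1" using a by simp
    then have "2*k*(r-2) = (r-3)*(2*k) + 2*k" by (simp add: algebra_simps)
    then show ?thesis using a by simp
  qed
  finally show ?thesis .
qed

lemma x_nth: assumes "k \<ge> 1" "r \<ge> 3" "i < 2*k*(r-2) - 1"
  shows "x_word k r ! i = ff k i"
proof -
  define B where "B = word_pow [0::nat,1] (k-1) @ [0,0]"
  have lB: "length B = 2*k" using assms by (simp add: B_def wp_len)
  have Bn: "B ! m = (if 2*k-2 \<le> m then 0 else m mod 2)" if "m < 2*k" for m
    using that assms n01'[of m k "[0,0]"] by (auto simp: B_def nth_append wp_len n00)
  have x: "x_word k r = word_pow B (r-3) @ (word_pow [0,1] (k-1) @ [0])"
    by (simp add: x_word_def B_def)
  show ?thesis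
  proof (cases "i < (r-3) * (2*k)")
    case True
    then have "x_word k r ! i = B ! (i mod (2*k))"
      by (simp add: x nth_append wp_len wp_nth lB)
    also have "\<dots> = ff k i" using assms Bn[of "i mod (2*k)"]
      by (simp add: ff_def mod2k)
    finally show ?thesis .
  next
    case False
    define i' where "i' = i - (r-3)*(2*k)"
    have r2: "2*k*(r-2) = (r-3)*(2*k) + 2*k"
    proof -
      have "r - 2 = (r-3) + 1" using assms by simp
      then show ?thesis by (simp add: algebra_simps)
    qed
    have i': "i' < 2*k - 1" "i = (r-3)*(2*k) + i'" using False assms(3) r2 by (auto simp: i'_def)
    have "x_word k r ! i = (word_pow [0,1] (k-1) @ [0]) ! i'"
      using False by (simp add: x nth_append wp_len lB i'_def)
    also have "\<dots> = (if 2*k-2 \<le> i' then 0 else i' mod 2)"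
      using i' assms n01'[of i' k "[0]"] by (auto simp: nth_append wp_len)
    also have "\<dots> = ff k i"
    proof -
      have "i mod (2*k) = i'" using i' by simp
      moreover have "i mod 2 = i' mod 2"
      proof -
        have "i = ((r-3)*k)*2 + i'" using i' by (simp add: algebra_simps)
        then show ?thesis by (metis mod_mult_self3)
      qed
      ultimately show ?thesis by (simp add: ff_def)
    qed
    finally show ?thesis .
  qed
qed



lemma ff_le1: "ff k i \<le> 1"
proof -
  have "i mod 2 \<le> 1" by presburger
  then show ?thesis by (simp add: ff_def)
qed

lemma ff_11: assumes "k \<ge> 1" "ff k i \<noteq> 0" shows "ff k (i+1) = 0"
proof -
  have m: "i mod (2*k) < 2*k - 2" "i mod 2 = 1" using assms by (auto simp: ff_def split: if_splits)
  then have "(i+1) mod (2*k) = i mod (2*k) + 1" using mod_Suc[of i "2*k"] by auto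
  moreover have "(i+1) mod 2 = 0" using m(2) by (simp add: mod_Suc)
  moreover have "(i+1) mod (2*k) mod 2 = (i+1) mod 2" by (rule mod2k)
  ultimately show ?thesis by (simp add: ff_def)
qed

lemma zz: assumes "k \<ge> 2" shows "(ff k i = 0 \<and> ff k (i+1) = 0) \<longleftrightarrow> 2*k-2 \<le> i mod (2*k)"
proof
  assume h: "ff k i = 0 \<and> ff k (i+1) = 0"
  show "2*k-2 \<le> i mod (2*k)"
  proof (rule ccontr)
    assume c: "\<not> ?thesis"
    then have e: "i mod 2 = 0" using h by (simp add: ff_def)
    have s: "(i+1) mod (2*k) = i mod (2*k) + 1" using c mod_Suc[of i "2*k"] by auto
    have "(i+1) mod 2 = 1" using e by (simp add: mod_Suc)
    moreover have "(i+1) mod (2*k) mod 2 = (i+1) mod 2" by (rule mod2k)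
    moreover have "i mod (2*k) mod 2 = i mod 2" by (rule mod2k)
    ultimately have "\<not> 2*k-2 \<le> (i+1) mod (2*k)"
    proof -
      define m where "m = i mod (2*k)"
      have "m mod 2 = 0" "m < 2*k-2" using e c \<open>i mod (2*k) mod 2 = i mod 2\<close> by (auto simp: m_def)
      then have "\<not> 2*k-2 \<le> m + 1" by presburger
      then show ?thesis using s m_def by simp
    qed
    then show False using h \<open>(i+1) mod 2 = 1\<close> by (simp add: ff_def)
  qed
next
  assume h: "2*k-2 \<le> i mod (2*k)"
  have lt: "i mod (2*k) < 2*k" using assms by simp
  have "(i+1) mod (2*k) = (if i mod (2*k) + 1 = 2*k then 0 else i mod (2*k) + 1)"
    using mod_Suc[of i "2*k"] by simp
  then have "ff k (i+1) = 0"
  proof (cases "i mod (2*k) + 1 = 2*k")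
    case True
    then have "(i+1) mod (2*k) = 0" using mod_Suc[of i "2*k"] by simp
    then have "(i+1) mod 2 = 0" using mod2k[of "i+1" k] by simp
    then show ?thesis using \<open>(i+1) mod (2*k) = 0\<close> assms by (simp add: ff_def)
  next
    case False
    then show ?thesis using h lt mod_Suc[of i "2*k"] by (auto simp: ff_def)
  qed
  then show "ff k i = 0 \<and> ff k (i+1) = 0" using h by (simp add: ff_def)
qed

lemma nxt: fixes k i :: nat assumes "k \<ge> 1" "i mod (2*k) = 2*k-2" shows "(i+1) mod (2*k) = 2*k-1"
  using assms mod_Suc[of i "2*k"] by auto

lemma two: fixes k i p :: nat assumes "k \<ge> 1" "2*k-2 \<le> i mod (2*k)" "2*k-2 \<le> (i+p) mod (2*k)" "0 < p" "p < 2*k-1"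
  shows "p = 1 \<and> i mod (2*k) = 2*k-2"
proof -
  define m where "m = i mod (2*k)"
  have lt: "m < 2*k" using assms(1) by (simp add: m_def)
  have e: "(i+p) mod (2*k) = (m + p) mod (2*k)" by (simp add: m_def mod_add_left_eq)
  show ?thesis
  proof (cases "m + p < 2*k")
    case True
    then have "(i+p) mod (2*k) = m + p" using e by simp
    then show ?thesis using assms True m_def by auto
  next
    case False
    then have "(i+p) mod (2*k) = m + p - 2*k" using e lt assms(5)
      by (simp add: le_mod_geq)
    then have "2*k-2 \<le> m + p - 2*k" using assms(3) by simp
    then show ?thesis using assms(5) lt False by linarith
  qed
qed

lemma window: fixes k t :: nat assumes "k \<ge> 1" shows "\<exists>m \<le> 2*k-2. 2*k-2 \<le> (t+m) mod (2*k)"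
proof (cases "2*k-2 \<le> t mod (2*k)")
  case True then show ?thesis by (rule_tac x=0 in exI) simp
next
  case False
  define m where "m = 2*k-2 - t mod (2*k)"
  have "(t+m) mod (2*k) = (t mod (2*k) + m) mod (2*k)" by (simp add: mod_add_left_eq)
  also have "\<dots> = 2*k-2" using False assms by (simp add: m_def)
  finally show ?thesis using m_def by (rule_tac x=m in exI) auto
qed



lemma factor_nth: assumes "is_factor v x"
  shows "\<exists>s. s + length v \<le> length x \<and> (\<forall>j<length v. v!j = x!(s+j))"
proof -
  obtain a b where "x = a @ v @ b" using assms by (auto simp: is_factor_def)
  then show ?thesis by (rule_tac x="length a" in exI) (auto simp: nth_append)
qed

lemma concat_eq_len: "\<forall>i<length us. length (us!i) = p \<Longrightarrow> length (concat us) = length us * p"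
proof (induction us)
  case Nil then show ?case by simp
next
  case (Cons a us)
  have "length a = p" using Cons.prems by auto
  moreover have "\<forall>i<length us. length (us!i) = p" using Cons.prems by auto
  ultimately show ?case using Cons.IH by simp
qed

lemma concat_nth: "\<forall>i<length us. length (us!i) = p \<Longrightarrow> i < length us \<Longrightarrow> j < p \<Longrightarrow>
   concat us ! (i*p+j) = us!i!j"
proof (induction us arbitrary: i)
  case Nil then show ?case by simp
next
  case (Cons a us)
  have la: "length a = p" using Cons.prems by auto
  have al: "\<forall>i<length us. length (us!i) = p" using Cons.prems by auto
  show ?case
  proof (cases i)
    case 0 then show ?thesis using la Cons.prems by (simp add: nth_append)
  next
    case (Suc i')
    then have "concat (a#us) ! (i*p+j) = concat us ! (i'*p+j)" using la by (simp add: nth_append)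
    also have "\<dots> = us!i'!j" using Cons.IH[OF al, of i'] Cons.prems Suc by simp
    finally show ?thesis using Suc by simp
  qed
qed



lemma no_power: assumes "k \<ge> 4" "r \<ge> 3" "r - 1 \<le> k" "is_factor v (x_word k r)" "is_power k v"
  shows False
proof -
  obtain u where u: "u \<noteq> []" "v = word_pow u k" using assms(5) by (auto simp: is_power_def)
  define p where "p = length u"
  define L where "L = k*p"
  define N where "N = 2*k*(r-2) - 1"
  have p1: "p \<ge> 1" using u by (simp add: p_def Suc_le_eq)
  have lv: "length v = L" using u by (simp add: wp_len L_def p_def)
  obtain s where s: "s + L \<le> N" "\<forall>j<L. v!j = x_word k r ! (s+j)"
    using factor_nth[OF assms(4)] x_len[of k r] assms lv N_def by auto
  have V: "v!j = ff k (s+j)" if "j < L" for j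
    using s that x_nth[of k r "s+j"] assms N_def by auto
  have per: "v!j = v!(j+p)" if "j + p < L" for j
  proof -
    have "v!j = u!(j mod p)" using that u wp_nth[of j k u] by (simp add: L_def p_def)
    moreover have "v!(j+p) = u!((j+p) mod p)" using that u wp_nth[of "j+p" k u] by (simp add: L_def p_def)
    ultimately show ?thesis by simp
  qed
  have k2: "k \<ge> 2" using assms by simp
  have zzv: "(v!j = 0 \<and> v!(j+1) = 0) \<longleftrightarrow> 2*k-2 \<le> (s+j) mod (2*k)" if "j+1 < L" for j
    using V[of j] V[of "j+1"] that zz[OF k2, of "s+j"] by simp
  have pb: "p < 2*k-2"
  proof -
    have "2*k*(r-2) \<le> 2*k*(k-1)" using assms by (intro mult_le_mono2) simp
    moreover have "2*k*(r-2) \<ge> 1" using assms by simp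
    moreover have "k*p \<le> 2*k*(r-2) - 1" using s(1) L_def N_def by simp
    moreover have "2*k*(k-1) = k*(2*k-2)" by (simp add: right_diff_distrib')
    ultimately have "k*p < k*(2*k-2)" by linarith
    then show ?thesis by simp
  qed
  show False
  proof (cases "p = 1")
    case True
    then have L4: "L \<ge> 4" using assms L_def by simp
    have e1: "v!0 = v!1" "v!1 = v!2" using per[of 0] per[of 1] True L4 by (auto simp: numeral_2_eq_2)
    have e3: "v!(2+1) = v!2" using per[of 2] True L4 by simp
    show False
    proof (cases "ff k s = 0")
      case False
      then have "ff k (s+1) = 0" using ff_11 assms by simp
      then show False using V[of 0] V[of 1] e1 L4 False by simp
    next
      case True
      then have z: "v!0 = 0" "v!1 = 0" "v!2 = 0" using V[of 0] e1 L4 by auto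
      have a1: "2*k-2 \<le> (s+0) mod (2*k)" using zzv[of 0] z L4 by simp
      have z2: "v!(1+1) = 0" using z(3) by (simp add: numeral_2_eq_2)
      have a3: "2*k-2 \<le> (s+2) mod (2*k)" using zzv[of 2] z(3) e3 L4 by simp
      have a2: "2*k-2 \<le> (s+1) mod (2*k)" using zzv[of 1] z(2) z2 L4 by simp
      have "s mod (2*k) = 2*k-2" using two[of k s 1] a1 a2 assms by simp
      then have "(s+1) mod (2*k) = 2*k-1" using nxt assms by simp
      moreover have "(s+1) mod (2*k) = 2*k-2" using two[of k "s+1" 1] a2 assms
        a3 by (simp add: add.assoc)
      ultimately show False using assms by simp
    qed
  next
    case False
    then have p2: "p \<ge> 2" using p1 by simp
    have Lp: "k*p \<ge> 4*p" using assms by simp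
    obtain m where m: "m \<le> 2*k-2" "2*k-2 \<le> (s+m) mod (2*k)" using window[of k s] assms by auto
    have "k*2 \<le> k*p" using p2 by simp
    then have mL: "m + 1 < L" using m(1) L_def assms by linarith
    have z: "v!m = 0" "v!(m+1) = 0" using zzv[OF mL] m by auto
    show False
    proof (cases "m + p + 1 < L")
      case True
      have "v!(m+p) = 0" "v!(m+p+1) = 0" using per[of m] per[of "m+1"] True z by auto
      then have "2*k-2 \<le> (s+m+p) mod (2*k)" using zzv[of "m+p"] True by (simp add: add.assoc)
      then show False using two[of k "s+m" p] m p2 pb assms by linarith
    next
      case c: False
      have mp: "m \<ge> p" using c Lp p2 L_def by linarith
      define m' where "m' = m - p"
      have "v!m' = 0" "v!(m'+1) = 0" using per[of m'] per[of "m'+1"] mp mL z m'_def by auto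
      then have "2*k-2 \<le> (s+m') mod (2*k)" using zzv[of m'] mp mL m'_def by simp
      moreover have "s + m' + p = s + m" using mp m'_def by simp
      ultimately show False using two[of k "s+m'" p] m p2 pb assms by (simp add: add.assoc) linarith
    qed
  qed
qed



lemma no_anti: assumes "k \<ge> 2" "r \<ge> 3" "is_factor v (x_word k r)" "is_antipower r v"
  shows False
proof -
  obtain us where us: "length us = r" "v = concat us" "\<forall>i<r. \<forall>j<r. length (us!i) = length (us!j)"
    "distinct us" using assms(4) unfolding is_antipower_def by blast
  define p where "p = length (us!0)"
  define N where "N = 2*k*(r-2) - 1"
  have lp: "\<forall>i<length us. length (us!i) = p"
  proof (intro allI impI)
    fix i assume "i < length us"
    then show "length (us!i) = p" using us(3)[rule_format, of i 0] us(1) assms(2) p_def by simp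
  qed
  have lv: "length v = r*p" using concat_eq_len[OF lp] us by simp
  obtain s where s: "s + r*p \<le> N" "\<forall>j<r*p. v!j = x_word k r ! (s+j)"
    using factor_nth[OF assms(3)] x_len[of k r] assms lv N_def by auto
  have Bl: "us!i!j = ff k (s+i*p+j)" if "i < r" "j < p" for i j
  proof -
    have "i*p + p \<le> r*p" using mult_le_mono1[OF Suc_leI[OF that(1)], of p] by simp
    then have lt: "i*p+j < r*p" using that by linarith
    have "us!i!j = v!(i*p+j)" using concat_nth[OF lp, of i j] that us by simp
    also have "\<dots> = ff k (s+i*p+j)" using s lt x_nth[of k r "s+(i*p+j)"] assms N_def
      by (simp add: add.assoc)
    finally show ?thesis .
  qed
  have dist: "i = i'" if "us!i = us!i'" "i < r" "i' < r" for i i'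
  proof -
    have "i < length us" "i' < length us" using that us(1) by simp_all
    then have "(us!i = us!i') = (i = i')" by (rule nth_eq_iff_index_eq[OF us(4)])
    then show ?thesis using that(1) by simp
  qed
  have p0: "p \<noteq> 0"
  proof
    assume "p = 0"
    moreover have "length (us!0) = p" "length (us!1) = p" using lp us(1) assms(2) by auto
    ultimately have "us!0 = us!1" by simp
    then show False using dist[of 0 1] assms by simp
  qed
  define A where "A = {i. i < r \<and> (\<forall>j. j+1 < p \<longrightarrow> \<not>(us!i!j = 0 \<and> us!i!(j+1) = 0))}"
  define Bs where "Bs = {..<r} - A"
  have cA: "card A \<le> 2"
  proof -
    have "inj_on (\<lambda>i. us!i!0) A"
    proof (rule inj_onI)
      fix i i' assume ii: "i \<in> A" "i' \<in> A" "us!i!0 = us!i'!0"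
      have "\<forall>j<p. us!i!j = us!i'!j"
      proof (intro allI impI)
        fix j assume "j < p"
        then show "us!i!j = us!i'!j"
        proof (induction j)
          case 0 then show ?case using ii by simp
        next
          case (Suc j)
          then have IH: "us!i!j = us!i'!j" by simp
          have r: "i < r" "i' < r" using ii A_def by auto
          have le: "us!i!(j+1) \<le> 1" "us!i'!(j+1) \<le> 1"
            using Bl[of i "j+1"] Bl[of i' "j+1"] r Suc.prems ff_le1 by auto
          show ?case
          proof (cases "us!i!j = 0")
            case True
            then have "us!i!(j+1) \<noteq> 0" "us!i'!(j+1) \<noteq> 0" using ii IH Suc.prems A_def by auto
            then show ?thesis using le by simp
          next
            case False
            then have "ff k (s+i*p+j) \<noteq> 0" "ff k (s+i'*p+j) \<noteq> 0" using Bl r Suc.prems IH by auto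
            then have "ff k (s+i*p+j+1) = 0" "ff k (s+i'*p+j+1) = 0" using ff_11 assms by auto
            then show ?thesis using Bl[of i "j+1"] Bl[of i' "j+1"] r Suc.prems by (simp add: add.assoc)
          qed
        qed
      qed
      moreover have "i < r" "i' < r" using ii A_def by auto
      ultimately have "us!i = us!i'" using lp us(1) by (intro nth_equalityI) auto
      then show "i = i'" using dist \<open>i < r\<close> \<open>i' < r\<close> by blast
    qed
    moreover have "(\<lambda>i. us!i!0) ` A \<subseteq> {0,1}"
    proof
      fix x assume "x \<in> (\<lambda>i. us!i!0) ` A"
      then obtain i where "i \<in> A" "x = us!i!0" by auto
      then have "x = ff k (s+i*p+0)" using Bl[of i 0] p0 A_def by auto
      then show "x \<in> {0,1}" using ff_le1[of k "s+i*p+0"] by auto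
    qed
    ultimately have "card A \<le> card {0::nat,1}" by (intro card_inj_on_le) auto
    then show ?thesis by simp
  qed
  define P where "P i w \<longleftrightarrow> s+i*p \<le> w \<and> w < s+i*p+p \<and> w mod (2*k) = 2*k-1 \<and> w < N" for i w
  have exW: "\<exists>w. P i w" if iB: "i \<in> Bs" for i
  proof -
    have ir: "i < r" using that Bs_def by auto
    obtain j where j: "j+1 < p" "us!i!j = 0" "us!i!(j+1) = 0" using iB Bs_def A_def by auto
    define q where "q = s+i*p+j"
    have "ff k q = 0 \<and> ff k (q+1) = 0" using Bl[of i j] Bl[of i "j+1"] j ir q_def by (simp add: add.assoc)
    then have qm: "2*k-2 \<le> q mod (2*k)" using zz assms by blast
    have "i*p + p \<le> r*p" using mult_le_mono1[OF Suc_leI[OF ir], of p] by simp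
    then have bnd: "s+i*p+p \<le> N" using s by linarith
    show ?thesis
    proof (cases "q mod (2*k) = 2*k-1")
      case True then show ?thesis using j q_def bnd by (rule_tac x=q in exI) (auto simp: P_def)
    next
      case False
      then have "q mod (2*k) = 2*k-2" using qm mod_less_divisor[of "2*k" q] assms by linarith
      then have "(q+1) mod (2*k) = 2*k-1" using nxt assms by simp
      then show ?thesis using j q_def bnd by (rule_tac x="q+1" in exI) (auto simp: P_def)
    qed
  qed
  define W where "W i = (SOME w. P i w)" for i
  have PW: "P i (W i)" if "i \<in> Bs" for i unfolding W_def by (rule someI_ex[OF exW[OF that]])
  have cB: "card Bs \<le> r - 3"
  proof -
    have "inj_on (\<lambda>i. W i div (2*k)) Bs"
    proof (rule inj_onI)
      fix i i' assume ii: "i \<in> Bs" "i' \<in> Bs" "W i div (2*k) = W i' div (2*k)"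
      have "W i mod (2*k) = W i' mod (2*k)" using PW ii by (simp add: P_def)
      moreover have "W i = W i div (2*k) * (2*k) + W i mod (2*k)" by (rule div_mult_mod_eq[symmetric])
      moreover have "W i' = W i' div (2*k) * (2*k) + W i' mod (2*k)" by (rule div_mult_mod_eq[symmetric])
      ultimately have eq: "W i = W i'" using ii(3) by simp
      show "i = i'"
      proof (rule ccontr)
        assume "i \<noteq> i'"
        then consider "i < i'" | "i' < i" by linarith
        then show False
        proof cases
          case 1
          then have "i*p + p \<le> i'*p" using mult_le_mono1[OF Suc_leI[OF 1], of p] by simp
          then show False using PW[OF ii(1)] PW[OF ii(2)] eq by (simp add: P_def)
        next
          case 2
          then have "i'*p + p \<le> i*p" using mult_le_mono1[OF Suc_leI[OF 2], of p] by simp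
          then show False using PW[OF ii(1)] PW[OF ii(2)] eq by (simp add: P_def)
        qed
      qed
    qed
    moreover have "(\<lambda>i. W i div (2*k)) ` Bs \<subseteq> {..<r-3}"
    proof
      fix x assume "x \<in> (\<lambda>i. W i div (2*k)) ` Bs"
      then obtain i where i: "i \<in> Bs" "x = W i div (2*k)" by auto
      define w where "w = W i"
      have w: "w mod (2*k) = 2*k-1" "w < N" using PW[OF i(1)] w_def by (auto simp: P_def)
      define d where "d = w div (2*k)"
      have e0: "w = d * (2*k) + w mod (2*k)" unfolding d_def by (rule div_mult_mod_eq[symmetric])
      then have e1: "w = d * (2*k) + (2*k-1)" unfolding w(1) .
      have "2*k*(r-2) = (r-2)*(2*k)" by simp
      then have "d * (2*k) + 2*k < (r-2)*(2*k)" using e1 w(2) N_def assms by linarith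
      then have "(d+1) * (2*k) < (r-2)*(2*k)" by simp
      then have "d + 1 < r - 2" using mult_less_cancel2 by blast
      then have "w div (2*k) + 1 < r - 2" using d_def by simp
      then show "x \<in> {..<r-3}" using i w_def by simp
    qed
    ultimately have "card Bs \<le> card {..<r-3}" by (intro card_inj_on_le) auto
    then show ?thesis by simp
  qed
  have "A \<subseteq> {..<r}" using A_def by auto
  then have "card Bs = r - card A" using Bs_def by (simp add: card_Diff_subset finite_subset)
  then show False using cA cB assms by linarith
qed


theorem theorem1:
  fixes k r :: nat
  assumes "r \<ge> 3" and "k \<ge> max (r - 1) 4"
  shows "int (length (x_word k r)) = 2 * int k * (int r - 2) - 1
     \<and> \<not> (\<exists>v. is_factor v (x_word k r) \<and> is_power k v)
     \<and> \<not> (\<exists>v. is_factor v (x_word k r) \<and> is_antipower r v)"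
proof (intro conjI)
  have k4: "k \<ge> 4" and rk: "r - 1 \<le> k" using assms by auto
  have l: "length (x_word k r) = 2*k*(r-2) - 1" using x_len[of k r] k4 assms(1) by simp
  have "2*k*(r-2) \<ge> 1" using k4 assms(1) by simp
  then have "int (length (x_word k r)) = int (2*k*(r-2)) - 1" using l by simp
  also have "int (2*k*(r-2)) = 2 * int k * (int r - 2)" using assms(1) by (simp add: of_nat_diff)
  finally show "int (length (x_word k r)) = 2 * int k * (int r - 2) - 1" .
  show "\<not> (\<exists>v. is_factor v (x_word k r) \<and> is_power k v)"
    using no_power[OF k4 assms(1) rk] by blast
  show "\<not> (\<exists>v. is_factor v (x_word k r) \<and> is_antipower r v)"
    using no_anti[of k r] k4 assms(1) by auto
qed

end
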